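(* Let $A\in\mathbb{R}^{n\times n}$ be symmetric positive definite, $b\in\mathbb{R}^n$, and let the $CD$ method (described in the context) be applied to $Ay=b$ with starting point $y_0\in\mathbb{R}^n$ and real parameters $\gamma_k\neq 0$ for all $k\ge 0$. If the directions $p_0,p_1,\dots,p_k$ ($k\ge 0$) are generated by the method, then they are mutually conjugate, i.e. $p_i^TAp_j=0$ for all $0\le i\neq j\le k$.
   Context: The $CD$ method for solving $Ay=b$, with $A$ symmetric positive definite, starting point $y_0\in\mathbb{R}^n$ and nonzero real parameters $\gamma_0,\gamma_1,\dots$, is the following iteration (all norms Euclidean). Set $r_0=b-Ay_0$; if $r_0=0$ stop; set $p_0=r_0$. For $k=0,1,2,\dots$: compute $a_k=\dfrac{r_k^Tp_k}{p_k^TAp_k}$, $y_{k+1}=y_k+a_kp_k$, $r_{k+1}=r_k-a_kAp_k$; if $r_{k+1}=0$ stop; otherwise set $\sigma_k=\gamma_k\dfrac{\|Ap_k\|^2}{p_k^TAp_k}$ and, if $k=0$, $p_1=\gamma_0Ap_0-\sigma_0p_0$, while if $k\ge1$, $\omega_k=\gamma_k\dfrac{(Ap_k)^T(Ap_{k-1})}{p_{k-1}^TAp_{k-1}}$ and $p_{k+1}=\gamma_kAp_k-\sigma_kp_k-\omega_kp_{k-1}$. *)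

theory Defs
  imports "HOL-Analysis.Analysis"
begin

definition sym_pos_def :: "real^'n^'n \<Rightarrow> bool" where
  "sym_pos_def A \<longleftrightarrow> transpose A = A \<and> (\<forall>x. x \<noteq> 0 \<longrightarrow> x \<bullet> (A *v x) > 0)"

text \<open>The CD iteration.  cd_state A b y0 gam k = (y_k, r_k, p_k, p_(k-1)),
  with p_(-1) := 0 (unused).  Stopping is expressed separately: the direction
  p_k is generated by the method iff r_0, ..., r_k are all nonzero.\<close>
fun cd_state :: "real^'n^'n \<Rightarrow> real^'n \<Rightarrow> real^'n \<Rightarrow> (nat \<Rightarrow> real) \<Rightarrow> nat
    \<Rightarrow> (real^'n) \<times> (real^'n) \<times> (real^'n) \<times> (real^'n)" where
  "cd_state A b y0 gam 0 = (y0, b - A *v y0, b - A *v y0, 0)"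
| "cd_state A b y0 gam (Suc k) =
     (let (y, r, p, q) = cd_state A b y0 gam k;
          a = (r \<bullet> p) / (p \<bullet> (A *v p));
          y' = y + a *\<^sub>R p;
          r' = r - a *\<^sub>R (A *v p);
          \<sigma> = gam k * (norm (A *v p))\<^sup>2 / (p \<bullet> (A *v p));
          p' = (if k = 0 then gam 0 *\<^sub>R (A *v p) - \<sigma> *\<^sub>R p
                else (let \<omega> = gam k * ((A *v p) \<bullet> (A *v q)) / (q \<bullet> (A *v q))
                      in gam k *\<^sub>R (A *v p) - \<sigma> *\<^sub>R p - \<omega> *\<^sub>R q))
      in (y', r', p', p))"

definition cd_y where "cd_y A b y0 gam k = fst (cd_state A b y0 gam k)"
definition cd_r where "cd_r A b y0 gam k = fst (snd (cd_state A b y0 gam k))"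
definition cd_p where "cd_p A b y0 gam k = fst (snd (snd (cd_state A b y0 gam k)))"

definition cd_generated where
  "cd_generated A b y0 gam k \<longleftrightarrow> (\<forall>j\<le>k. cd_r A b y0 gam j \<noteq> 0)"

end

theory Submission
  imports Defs
begin

definition cd_q where "cd_q A b y0 gam k = snd (snd (snd (cd_state A b y0 gam k)))"

lemma cd_q0: "cd_q A b y0 gam 0 = 0" by (simp add: cd_q_def)
lemma cd_qS: "cd_q A b y0 gam (Suc k) = cd_p A b y0 gam k"
  by (simp add: cd_q_def cd_p_def Let_def split: prod.split)
lemma cd_rS: "cd_r A b y0 gam (Suc k) = cd_r A b y0 gam k -
   ((cd_r A b y0 gam k \<bullet> cd_p A b y0 gam k) / (cd_p A b y0 gam k \<bullet> (A *v cd_p A b y0 gam k))) *\<^sub>R (A *v cd_p A b y0 gam k)"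
  by (simp add: cd_r_def cd_p_def Let_def split: prod.split)
lemma cd_r0: "cd_r A b y0 gam 0 = cd_p A b y0 gam 0"
  by (simp add: cd_r_def cd_p_def)
lemma cd_pS: "cd_p A b y0 gam (Suc k) = gam k *\<^sub>R (A *v cd_p A b y0 gam k)
   - (gam k * (norm (A *v cd_p A b y0 gam k))\<^sup>2 / (cd_p A b y0 gam k \<bullet> (A *v cd_p A b y0 gam k))) *\<^sub>R cd_p A b y0 gam k
   - (gam k * ((A *v cd_p A b y0 gam k) \<bullet> (A *v cd_q A b y0 gam k)) / (cd_q A b y0 gam k \<bullet> (A *v cd_q A b y0 gam k))) *\<^sub>R cd_q A b y0 gam k"
proof (cases k)
  case 0 then show ?thesis by (simp add: cd_q_def cd_p_def Let_def split: prod.split)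
next
  case (Suc m) then show ?thesis by (simp add: cd_q_def cd_p_def Let_def split: prod.split)
qed

lemma symA:
  fixes A :: "real^'n^'n"
  assumes "transpose A = A"
  shows "(A *v x) \<bullet> y = x \<bullet> (A *v y)"
  by (metis assms dot_lmul_matrix vector_transpose_matrix)

lemma in_span_orth:
  fixes y x :: "real^'n"
  assumes "x \<in> span S" "\<forall>s\<in>S. y \<bullet> s = 0"
  shows "y \<bullet> x = 0"
  using orthogonal_to_span[OF assms(1), of y] assms(2) unfolding orthogonal_def by blast

context
  fixes A :: "real^'n^'n" and b y0 :: "real^'n" and gam :: "nat \<Rightarrow> real"
  assumes spd: "sym_pos_def A" and gnz: "\<forall>j. gam j \<noteq> 0"
begin

abbreviation "p \<equiv> cd_p A b y0 gam"
abbreviation "q \<equiv> cd_q A b y0 gam"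
abbreviation "r \<equiv> cd_r A b y0 gam"

lemma sym': "(A *v x) \<bullet> y = x \<bullet> (A *v y)"
  using spd symA sym_pos_def_def by blast

lemma symm: "x \<bullet> (A *v y) = y \<bullet> (A *v x)"
  by (metis sym' inner_commute)

lemma pos: "x \<noteq> 0 \<Longrightarrow> x \<bullet> (A *v x) > 0"
  using spd sym_pos_def_def by blast

lemma Ap_expr: "A *v p k = (1 / gam k) *\<^sub>R (p (Suc k)
   + (gam k * (norm (A *v p k))\<^sup>2 / (p k \<bullet> (A *v p k))) *\<^sub>R p k
   + (gam k * ((A *v p k) \<bullet> (A *v q k)) / (q k \<bullet> (A *v q k))) *\<^sub>R q k)"
proof -
  have "gam k \<noteq> 0" using gnz by auto
  then show ?thesis unfolding cd_pS[of A b y0 gam k] by (simp add: scaleR_diff_right)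
qed

lemma q_in: "q k \<in> span (p ` {..k})"
proof (cases k)
  case 0 then show ?thesis by (simp add: cd_q0 span_zero)
next
  case (Suc m) then show ?thesis by (simp add: cd_qS span_base)
qed

lemma r_span: "r m \<in> span (p ` {..m})"
proof (induction m)
  case 0 then show ?case by (simp add: cd_r0 span_base)
next
  case (Suc m)
  have sub: "span (p ` {..m}) \<subseteq> span (p ` {..Suc m})"
    by (intro span_mono image_mono) auto
  have "A *v p m \<in> span (p ` {..Suc m})"
    apply (subst Ap_expr)
    apply (intro span_mul span_add)
    using sub q_in[of m] by (auto intro: span_base)
  then show ?case unfolding cd_rS using Suc sub
    by (intro span_diff span_mul) auto
qed

lemma pS_inner: "p (Suc m) \<bullet> v = gam m * ((A *v p m) \<bullet> v)
   - (gam m * (norm (A *v p m))\<^sup>2 / (p m \<bullet> (A *v p m))) * (p m \<bullet> v)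
   - (gam m * ((A *v p m) \<bullet> (A *v q m)) / (q m \<bullet> (A *v q m))) * (q m \<bullet> v)"
  unfolding cd_pS[of A b y0 gam m] by (simp add: inner_diff_left)

lemma rS_inner: "r (Suc m) \<bullet> v = r m \<bullet> v - ((r m \<bullet> p m) / (p m \<bullet> (A *v p m))) * ((A *v p m) \<bullet> v)"
  unfolding cd_rS[of A b y0 gam m] by (simp add: inner_diff_left)

lemma main: "(\<forall>j\<le>m. r j \<noteq> 0) \<Longrightarrow> (\<forall>i\<le>m. \<forall>j\<le>m. i\<noteq>j \<longrightarrow> p i \<bullet> (A *v p j) = 0) \<and> (\<forall>j\<le>m. p j \<noteq> 0) \<and> (\<forall>j<m. r m \<bullet> p j = 0)"
proof (induction m)
  case 0
  then show ?case using cd_r0[of A b y0 gam] by auto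
next
  case (Suc m)
  then have IH: "\<forall>i\<le>m. \<forall>j\<le>m. i\<noteq>j \<longrightarrow> p i \<bullet> (A *v p j) = 0" "\<forall>j\<le>m. p j \<noteq> 0" "\<forall>j<m. r m \<bullet> p j = 0"
    by auto
  have rnz: "r (Suc m) \<noteq> 0" using Suc.prems by auto
  have dpos: "p j \<bullet> (A *v p j) > 0" if "j \<le> m" for j using IH(2) that pos by blast
  have qorth: "q j \<bullet> (A *v p i) = 0" if "j \<le> m" "i \<le> m" "j \<noteq> Suc i" for i j
  proof (cases j)
    case 0 then show ?thesis by (simp add: cd_q0)
  next
    case (Suc j') then show ?thesis using IH(1) that by (simp add: cd_qS)
  qed
  have a: "p (Suc m) \<bullet> (A *v p j) = 0" if "j \<le> m" for j
  proof -
    consider "j = m" | "Suc j = m" | "Suc j < m" using \<open>j \<le> m\<close> by (cases "j = m"; cases "Suc j = m") auto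
    then show ?thesis
    proof cases
      case 1
      have "(A *v p m) \<bullet> (A *v p m) = (norm (A *v p m))\<^sup>2" by (simp add: power2_norm_eq_inner)
      moreover have "q m \<bullet> (A *v p m) = 0" using qorth[of m m] by simp
      ultimately show ?thesis using 1 dpos[of m] unfolding pS_inner by simp
    next
      case 2
      have qm: "q m = p j" using 2 cd_qS by metis
      have "p m \<bullet> (A *v p j) = 0" using IH(1) 2 by auto
      then show ?thesis using dpos[of j] 2 unfolding pS_inner qm by (simp add: sym')
    next
      case 3
      have e1: "p m \<bullet> (A *v p j) = 0" using IH(1) 3 by auto
      have e2: "q m \<bullet> (A *v p j) = 0" using qorth[of m j] 3 by auto
      have f1: "p (Suc j) \<bullet> (A *v p m) = 0" using IH(1) 3 by auto
      have f2: "p j \<bullet> (A *v p m) = 0" using IH(1) 3 by auto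
      have f3: "q j \<bullet> (A *v p m) = 0" using qorth[of j m] 3 by auto
      have "(A *v p m) \<bullet> (A *v p j) = (A *v p j) \<bullet> (A *v p m)" by (simp add: inner_commute)
      also have "\<dots> = 0"
        apply (subst Ap_expr[of j])
        using f1 f2 f3 by (simp add: inner_add_left)
      finally show ?thesis unfolding pS_inner using e1 e2 by simp
    qed
  qed
  have conj: "\<forall>i\<le>Suc m. \<forall>j\<le>Suc m. i\<noteq>j \<longrightarrow> p i \<bullet> (A *v p j) = 0"
  proof (intro allI impI)
    fix i j assume h: "i \<le> Suc m" "j \<le> Suc m" "i \<noteq> j"
    show "p i \<bullet> (A *v p j) = 0"
    proof (cases "i = Suc m")
      case True then show ?thesis using a[of j] h by auto
    next
      case False
      show ?thesis
      proof (cases "j = Suc m")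
        case True then show ?thesis using a[of i] h False symm by auto
      next
        case False2: False
        then show ?thesis using IH(1) h False by auto
      qed
    qed
  qed
  have rorth: "\<forall>j<Suc m. r (Suc m) \<bullet> p j = 0"
  proof (intro allI impI)
    fix j assume "j < Suc m"
    then consider "j = m" | "j < m" by linarith
    then show "r (Suc m) \<bullet> p j = 0"
    proof cases
      case 1 then show ?thesis using dpos[of m] unfolding rS_inner by (simp add: sym')
    next
      case 2 then show ?thesis using IH by (simp add: rS_inner sym')
    qed
  qed
  have pnz: "p (Suc m) \<noteq> 0"
  proof
    assume p0: "p (Suc m) = 0"
    have "p ` {..Suc m} = insert 0 (p ` {..m})" using p0 by (auto simp: atMost_Suc)
    then have "r (Suc m) \<in> span (p ` {..m})" using r_span[of "Suc m"] by (simp add: span_insert_0)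
    then have "r (Suc m) \<bullet> r (Suc m) = 0"
      using rorth by (intro in_span_orth) auto
    then show False using rnz by simp
  qed
  show ?case using conj rorth pnz IH(2) by (auto simp: le_Suc_eq)
qed

end

theorem theorem1:
  fixes A :: "real^'n^'n" and b y0 :: "real^'n" and gam :: "nat \<Rightarrow> real" and k :: nat
  assumes "sym_pos_def A"
    and "\<forall>j. gam j \<noteq> 0"
    and "cd_generated A b y0 gam k"
  shows "\<forall>i\<le>k. \<forall>j\<le>k. i \<noteq> j \<longrightarrow> cd_p A b y0 gam i \<bullet> (A *v cd_p A b y0 gam j) = 0"
  using main[OF assms(1,2), of k] assms(3) unfolding cd_generated_def by blast

end
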